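(* Let $T:\Omega\to\Omega$ be measurable and $\mu$ a $T$-invariant probability measure, and let $U\subset\Omega$ with $\mu(U)>0$. Then for every $L\in\mathbb{N}$, $$\mathbb{P}(Z^L_U\ge1)=\mu(U)\sum_{j=1}^{L}\alpha_1(j,U).$$ If moreover $U_n\subset\Omega$ is a nested sequence with $\mu(U_n)\to0$, such that for every $L$ the limit $\alpha_1(L)=\lim_{n\to\infty}\alpha_1(L,U_n)$ exists and $\alpha_1=\lim_{L\to\infty}\alpha_1(L)>0$, then $$\lim_{L\to\infty}\lim_{n\to\infty}\frac{\mathbb{P}(Z^L_{U_n}\ge1)}{L\,\mu(U_n)}=\alpha_1.$$
   Context: $\mathbb{P}=\mathbb{P}_\mu$. $Z^L_U=\sum_{j=0}^{L-1}\mathbbm{1}_U\circ T^j$, so $\{Z^L_U\ge1\}$ is the set of points entering $U$ at some time $0\le j<L$. $\tau_U(x)=\min\{j\ge1:T^jx\in U\}$ is the first return/entry time, $\mu_U(A)=\mu(A\cap U)/\mu(U)$, and $\alpha_1(L,U)=\mu_U(L\le\tau_U)$. *)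

theory Defs
  imports "HOL-Probability.Probability"
begin

definition first_return :: "('a \<Rightarrow> 'a) \<Rightarrow> 'a set \<Rightarrow> 'a \<Rightarrow> enat" where
  "first_return T U x =
     (if \<exists>j\<ge>1. (T ^^ j) x \<in> U then enat (LEAST j. j \<ge> 1 \<and> (T ^^ j) x \<in> U) else \<infinity>)"

definition cond_measure :: "'a measure \<Rightarrow> 'a set \<Rightarrow> 'a set \<Rightarrow> real" where
  "cond_measure M U A = measure M (A \<inter> U) / measure M U"

definition alpha1 :: "'a measure \<Rightarrow> ('a \<Rightarrow> 'a) \<Rightarrow> nat \<Rightarrow> 'a set \<Rightarrow> real" where
  "alpha1 M T L U = cond_measure M U {x \<in> space M. enat L \<le> first_return T U x}"

definition hit_event :: "'a measure \<Rightarrow> ('a \<Rightarrow> 'a) \<Rightarrow> nat \<Rightarrow> 'a set \<Rightarrow> 'a set" where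
  "hit_event M T L U = {x \<in> space M. (\<Sum>j<L. indicator U ((T ^^ j) x) :: nat) \<ge> 1}"

end

theory Submission
  imports Defs
begin

lemma cesaro0:
  fixes c :: "nat \<Rightarrow> real"
  assumes "c \<longlonglongrightarrow> 0"
  shows "(\<lambda>L. (\<Sum>j=1..L. c j) / real L) \<longlonglongrightarrow> 0"
proof (rule LIMSEQ_I)
  fix r :: real assume r: "0 < r"
  from LIMSEQ_D[OF assms, of "r/2"] r obtain N where N: "\<And>n. n \<ge> N \<Longrightarrow> norm (c n) < r/2"
    by auto
  define K where "K = (\<Sum>j=1..N. \<bar>c j\<bar>)"
  have K0: "K \<ge> 0" unfolding K_def by (simp add: sum_nonneg)
  obtain N2 :: nat where N2: "N2 > 2 * K / r" using reals_Archimedean2 by blast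
  show "\<exists>no. \<forall>n\<ge>no. norm ((\<Sum>j=1..n. c j) / real n - 0) < r"
  proof (intro exI allI impI)
    fix n assume n: "n \<ge> max (Suc N) N2"
    hence npos: "real n > 0" by simp
    have split: "{1..n} = {1..N} \<union> {Suc N..n}" using n by auto
    have "\<bar>\<Sum>j=1..n. c j\<bar> \<le> (\<Sum>j=1..n. \<bar>c j\<bar>)" by (rule sum_abs)
    also have "\<dots> = K + (\<Sum>j=Suc N..n. \<bar>c j\<bar>)"
      unfolding split K_def by (subst sum.union_disjoint) auto
    also have "(\<Sum>j=Suc N..n. \<bar>c j\<bar>) \<le> (\<Sum>j=Suc N..n. r/2)"
    proof (rule sum_mono)
      fix j assume "j \<in> {Suc N..n}"
      hence "norm (c j) < r/2" using N by auto
      thus "\<bar>c j\<bar> \<le> r/2" by simp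
    qed
    also have "\<dots> \<le> real n * (r/2)" using r by simp
    finally have A: "\<bar>\<Sum>j=1..n. c j\<bar> \<le> K + real n * (r/2)" by simp
    have "K < real n * (r/2)"
    proof -
      have "2 * K / r < real n" using N2 n by linarith
      hence "2 * K < real n * r" using r by (simp add: divide_less_eq)
      thus ?thesis by simp
    qed
    with A have "\<bar>\<Sum>j=1..n. c j\<bar> < real n * r" by linarith
    thus "norm ((\<Sum>j=1..n. c j) / real n - 0) < r"
      using npos by (simp add: abs_divide divide_less_eq mult.commute)
  qed
qed

lemma cesaro:
  fixes a :: "nat \<Rightarrow> real"
  assumes "a \<longlonglongrightarrow> l"
  shows "(\<lambda>L. (\<Sum>j=1..L. a j) / real L) \<longlonglongrightarrow> l"
proof -
  have "(\<lambda>n. a n - l) \<longlonglongrightarrow> 0" using assms by (simp add: LIM_zero)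
  from cesaro0[OF this] have 1: "(\<lambda>L. (\<Sum>j=1..L. a j - l) / real L) \<longlonglongrightarrow> 0" .
  have "(\<lambda>L. (\<Sum>j=1..L. a j - l) / real L + l) \<longlonglongrightarrow> 0 + l"
    by (intro tendsto_add 1 tendsto_const)
  moreover have "eventually (\<lambda>L. (\<Sum>j=1..L. a j - l) / real L + l = (\<Sum>j=1..L. a j) / real L) sequentially"
    using eventually_gt_at_top[of 0]
    by eventually_elim (simp add: sum_subtractf field_simps)
  ultimately show ?thesis by (simp add: tendsto_cong)
qed

lemma hit_sum_iff:
  fixes L :: nat and U :: "'a set" and f :: "nat \<Rightarrow> 'a"
  shows "((\<Sum>j<L. indicator U (f j) :: nat) \<ge> 1) \<longleftrightarrow> (\<exists>j<L. f j \<in> U)"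
  by (induction L) (auto simp: indicator_def less_Suc_eq)

lemma hit_event_eq:
  "hit_event M T L U = {x \<in> space M. \<exists>j<L. (T ^^ j) x \<in> U}"
  unfolding hit_event_def using hit_sum_iff[where L=L and U=U] by auto

lemma fr_ge:
  "enat k \<le> first_return T U x \<longleftrightarrow> (\<forall>j. 1 \<le> j \<and> j < k \<longrightarrow> (T ^^ j) x \<notin> U)"
proof (cases "\<exists>j\<ge>1. (T ^^ j) x \<in> U")
  case True
  let ?m = "LEAST j. j \<ge> 1 \<and> (T ^^ j) x \<in> U"
  have m: "?m \<ge> 1 \<and> (T ^^ ?m) x \<in> U" using LeastI_ex[OF True] by simp
  have fr: "first_return T U x = enat ?m" using True unfolding first_return_def by simp
  show ?thesis
  proof
    assume "enat k \<le> first_return T U x"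
    hence k: "k \<le> ?m" using fr by simp
    show "\<forall>j. 1 \<le> j \<and> j < k \<longrightarrow> (T ^^ j) x \<notin> U"
    proof (intro allI impI)
      fix j assume j: "1 \<le> j \<and> j < k"
      show "(T ^^ j) x \<notin> U"
      proof
        assume "(T ^^ j) x \<in> U"
        hence "?m \<le> j" using j by (intro Least_le) simp
        thus False using j k by simp
      qed
    qed
  next
    assume H: "\<forall>j. 1 \<le> j \<and> j < k \<longrightarrow> (T ^^ j) x \<notin> U"
    hence "\<not> ?m < k" using m by blast
    thus "enat k \<le> first_return T U x" using fr by simp
  qed
next
  case False
  thus ?thesis unfolding first_return_def by auto
qed

lemma funpow_meas: "T \<in> measurable M M \<Longrightarrow> (T ^^ n) \<in> measurable M M"
  by (induction n) (auto simp: measurable_comp)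

lemma hit_sets:
  assumes "T \<in> measurable M M" "U \<in> sets M"
  shows "hit_event M T L U \<in> sets M"
proof -
  have "hit_event M T L U = (\<Union>j<L. (T ^^ j) -` U \<inter> space M)"
    unfolding hit_event_eq by auto
  also have "\<dots> \<in> sets M"
    by (rule sets.finite_UN) (use measurable_sets[OF funpow_meas[OF assms(1)] assms(2)] in auto)
  finally show ?thesis .
qed

lemma part1:
  assumes P: "prob_space M" and Tm: "T \<in> measurable M M" and inv: "distr M M T = M"
    and U: "U \<in> sets M"
  shows "measure M (hit_event M T L U) =
           (\<Sum>j=1..L. measure M ({x \<in> space M. enat j \<le> first_return T U x} \<inter> U))"
proof (induction L)
  case 0
  then show ?case by (simp add: hit_event_eq)
next
  case (Suc L)
  interpret prob_space M by fact
  let ?H = "\<lambda>L. hit_event M T L U"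
  let ?P = "T -` ?H L \<inter> space M"
  have HS: "?H k \<in> sets M" for k using hit_sets[OF Tm U] .
  have PS: "?P \<in> sets M" using measurable_sets[OF Tm HS] .
  have Tsp: "x \<in> space M \<Longrightarrow> T x \<in> space M" for x using Tm by (auto simp: measurable_def)
  have swap: "(T ^^ j) (T x) = (T ^^ Suc j) x" for j x by (simp add: funpow_swap1)
  have sub: "?P \<subseteq> ?H (Suc L)"
  proof
    fix x assume "x \<in> ?P"
    then obtain j where "j < L" "(T ^^ j) (T x) \<in> U" "x \<in> space M" by (auto simp: hit_event_eq)
    thus "x \<in> ?H (Suc L)" unfolding hit_event_eq swap by (intro CollectI conjI exI[of _ "Suc j"]) auto
  qed
  have mP: "measure M ?P = measure M (?H L)"
    using measure_distr[OF Tm HS] inv by simp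
  have D: "?H (Suc L) - ?P = {x \<in> space M. enat (Suc L) \<le> first_return T U x} \<inter> U"
  proof (intro set_eqI iffI)
    fix x assume x: "x \<in> ?H (Suc L) - ?P"
    hence xs: "x \<in> space M" by (auto simp: hit_event_eq)
    have nj: "\<forall>j<L. (T ^^ Suc j) x \<notin> U" using x xs Tsp[OF xs] by (auto simp: hit_event_eq swap)
    have "\<exists>j<Suc L. (T ^^ j) x \<in> U" using x by (auto simp: hit_event_eq)
    then obtain j where j: "j < Suc L" "(T ^^ j) x \<in> U" by blast
    have "j = 0"
    proof (rule ccontr)
      assume "j \<noteq> 0" then obtain i where "j = Suc i" by (cases j) auto
      thus False using j nj by auto
    qed
    hence xU: "x \<in> U" using j by simp
    have "\<forall>j. 1 \<le> j \<and> j < Suc L \<longrightarrow> (T ^^ j) x \<notin> U"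
    proof (intro allI impI)
      fix j assume "1 \<le> j \<and> j < Suc L"
      then obtain i where "j = Suc i" "i < L" by (cases j) auto
      thus "(T ^^ j) x \<notin> U" using nj by auto
    qed
    thus "x \<in> {x \<in> space M. enat (Suc L) \<le> first_return T U x} \<inter> U"
      using xU xs fr_ge[of "Suc L" T U x] by simp
  next
    fix x assume x: "x \<in> {x \<in> space M. enat (Suc L) \<le> first_return T U x} \<inter> U"
    hence xs: "x \<in> space M" and xU: "x \<in> U" by auto
    have nj: "\<forall>j. 1 \<le> j \<and> j < Suc L \<longrightarrow> (T ^^ j) x \<notin> U" using x fr_ge[of "Suc L" T U x] by simp
    have "x \<notin> ?P"
    proof
      assume "x \<in> ?P"
      then obtain j where "j < L" "(T ^^ j) (T x) \<in> U" by (auto simp: hit_event_eq)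
      thus False using nj[rule_format, of "Suc j"] by (simp add: swap)
    qed
    moreover have "x \<in> ?H (Suc L)" using xs xU unfolding hit_event_eq by (intro CollectI conjI exI[of _ 0]) auto
    ultimately show "x \<in> ?H (Suc L) - ?P" by blast
  qed
  have "measure M (?H (Suc L)) = measure M (?H (Suc L) - ?P) + measure M ?P"
    using finite_measure_Diff[OF HS PS sub] by simp
  also have "\<dots> = measure M ({x \<in> space M. enat (Suc L) \<le> first_return T U x} \<inter> U) + measure M (?H L)"
    using D mP by simp
  finally show ?case using Suc.IH by simp
qed

theorem mainTheorem2:
  fixes M :: "'a measure" and T :: "'a \<Rightarrow> 'a"
  assumes "prob_space M"
    and "T \<in> measurable M M"
    and "distr M M T = M"
  shows "(\<forall>U \<in> sets M. measure M U > 0 \<longrightarrow>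
            (\<forall>L::nat. measure M (hit_event M T L U) = measure M U * (\<Sum>j=1..L. alpha1 M T j U)))
       \<and> (\<forall>(Us :: nat \<Rightarrow> 'a set) (a :: nat \<Rightarrow> real) (\<alpha> :: real).
            (\<forall>n. Us n \<in> sets M) \<longrightarrow> (\<forall>n. measure M (Us n) > 0) \<longrightarrow>
            (\<forall>n. Us (Suc n) \<subseteq> Us n) \<longrightarrow>
            (\<lambda>n. measure M (Us n)) \<longlonglongrightarrow> 0 \<longrightarrow>
            (\<forall>L. (\<lambda>n. alpha1 M T L (Us n)) \<longlonglongrightarrow> a L) \<longrightarrow>
            a \<longlonglongrightarrow> \<alpha> \<longrightarrow> \<alpha> > 0 \<longrightarrow>
            (\<exists>b :: nat \<Rightarrow> real.
               (\<forall>L\<ge>1. (\<lambda>n. measure M (hit_event M T L (Us n)) / (real L * measure M (Us n)))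
                          \<longlonglongrightarrow> b L)
               \<and> b \<longlonglongrightarrow> \<alpha>))"
proof -
  have P1: "measure M (hit_event M T L U) = measure M U * (\<Sum>j=1..L. alpha1 M T j U)"
    if U: "U \<in> sets M" and pos: "measure M U > 0" for U L
  proof -
    have "measure M U * (\<Sum>j=1..L. alpha1 M T j U) =
           (\<Sum>j=1..L. measure M ({x \<in> space M. enat j \<le> first_return T U x} \<inter> U))"
      unfolding sum_distrib_left alpha1_def cond_measure_def using pos by simp
    thus ?thesis using part1[OF assms U] by simp
  qed
  show ?thesis
  proof (intro conjI ballI impI allI)
    fix U L assume "U \<in> sets M" "measure M U > 0"
    thus "measure M (hit_event M T L U) = measure M U * (\<Sum>j=1..L. alpha1 M T j U)" by (rule P1)
  next
    fix Us :: "nat \<Rightarrow> 'a set" and a :: "nat \<Rightarrow> real" and \<alpha> :: real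
    assume S: "\<forall>n. Us n \<in> sets M" and pos: "\<forall>n. measure M (Us n) > 0"
      and lim: "\<forall>L. (\<lambda>n. alpha1 M T L (Us n)) \<longlonglongrightarrow> a L" and al: "a \<longlonglongrightarrow> \<alpha>"
    show "\<exists>b :: nat \<Rightarrow> real.
               (\<forall>L\<ge>1. (\<lambda>n. measure M (hit_event M T L (Us n)) / (real L * measure M (Us n)))
                          \<longlonglongrightarrow> b L)
               \<and> b \<longlonglongrightarrow> \<alpha>"
    proof (intro exI conjI allI impI)
      show "(\<lambda>L. (\<Sum>j=1..L. a j) / real L) \<longlonglongrightarrow> \<alpha>" by (rule cesaro[OF al])
    next
      fix L :: nat assume L1: "L \<ge> 1"
      have eq: "measure M (hit_event M T L (Us n)) / (real L * measure M (Us n))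
               = (\<Sum>j=1..L. alpha1 M T j (Us n)) / real L" for n
        using P1[OF S[rule_format, of n] pos[rule_format, of n], of L] pos[rule_format, of n] by simp
      have "(\<lambda>n. (\<Sum>j=1..L. alpha1 M T j (Us n)) / real L) \<longlonglongrightarrow> (\<Sum>j=1..L. a j) / real L"
        by (intro tendsto_divide tendsto_const tendsto_sum) (use lim L1 in auto)
      thus "(\<lambda>n. measure M (hit_event M T L (Us n)) / (real L * measure M (Us n)))
               \<longlonglongrightarrow> (\<Sum>j=1..L. a j) / real L" unfolding eq .
    qed
  qed
qed

end
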